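(* Let $G=(V,E)$ be a unit disk graph, let $r>1$ be real and $k\ge 8$ an integer, let $\theta=2\pi/k$ and $\lambda=\frac{1}{2r\cos\theta}$, and suppose $\cos\theta-\sin\theta>\frac{1}{\lambda+1}$. Let $YES_k$ be the output of the Yao-Sparse-Sink algorithm run on $G$ with parameters $k$ and $r$. Then $YES_k$ has maximum degree at most $k(k+2)$, and for every real $t\ge \frac{\lambda/\cos(2\theta)}{(\lambda+1)(\cos\theta-\sin\theta)-1}$, $YES_k$ is a length $t$-spanner of $G$.
   Context: Unit disk graph: $V$ a finite point set in the plane, $E=\{uv:|uv|\le1\}$ with $|uv|$ Euclidean distance; $G$ connected. A subgraph $H$ on the same vertex set is a length $t$-spanner of $G$ if for all $u,v$ the length of a shortest $uv$-path in $H$ is at most $t$ times that in $G$. Cones: at each point $x$ the plane is partitioned into $k$ half-open half-closed cones with apex $x$ of angle $\theta$, bounded by $k$ equally spaced rays (same directions at every node); $K_x(y)$ is the cone with apex $x$ containing $y$. Identifiers: nodes have distinct IDs; $\mathrm{ID}(\overrightarrow{xy})=(|xy|,\mathrm{ID}(x),\mathrm{ID}(y))$ compared lexicographically; $\mathrm{ID}(xy)=\min\{\mathrm{ID}(\overrightarrow{xy}),\mathrm{ID}(\overrightarrow{yx})\}$. The aspect ratio of a nonempty edge set is the length of its longest edge divided by the length of its shortest edge. Yao-Sparse-Sink algorithm. Step 1 (Yao step): for each node $x$ and each cone $K_x$ containing the other endpoint of some edge of $E$ incident to $x$, add to $E_Y$ the directed edge $\overrightarrow{xy}$ where $xy$ is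 such an edge with lowest $\mathrm{ID}(xy)$. Step 2 (filtering): $E_{YE}=\emptyset$; for each node $v$ and each cone $K_v$, let $F$ be the set of edges $\overrightarrow{xv}\in E_Y$ with $x\in K_v$; if $F\neq\emptyset$, let $\overrightarrow{uv}$ be the edge of $F$ of minimum ID, and for each integer $i\ge1$ let $F_i=\{\overrightarrow{ab}\in F: |uv|r^{i-1}\le|ab|<|uv|r^{i}\}$ (these sets partition $F$); for each nonempty $F_i$ add to $E_{YE}$ the edge of $F_i$ of smallest ID. Step 3 (Sink step on $(V,E_{YE})$): set $E_{YES}=\emptyset$; for each node $v$ and each cone $K_v$: let $I$ be the set of $x$ with $\overrightarrow{xv}\in E_{YE}$, $x\in K_v$; set $I(v)\leftarrow I$, $J\leftarrow(v)$ (ordered sequence), $T(v)\leftarrow\emptyset$; repeat until $I$ is empty: remove the first vertex $x$ from $J$; for each cone $K_x$, let $w\in I(x)\cap K_x$ minimize $\mathrm{ID}(\overrightarrow{wx})$ (if any), add $\overrightarrow{wx}$ to $T(v)$, move $w$ from $I$ to $J$, set $I(w)\leftarrow I(x)\cap K_x$; then add the edges of $T(v)$ to $E_{YES}$. Output $YES_k=(V,E_{YES})$ viewed as an undirected graph. *)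

theory Defs
  imports "HOL-Analysis.Complex_Transcendental" "HOL-Library.Product_Lexorder" "HOL-Library.Extended_Real"
begin

text \<open>Points of the plane are complex numbers; Euclidean distance is cmod (u - v).
  Node identifiers are given by a function idf, injective on the vertex set.\<close>

definition udg_edges :: "complex set \<Rightarrow> (complex \<times> complex) set" where
  "udg_edges V = {(u, v). u \<in> V \<and> v \<in> V \<and> u \<noteq> v \<and> cmod (u - v) \<le> 1}"

text \<open>Walks, their lengths and shortest path distance (Inf over the empty set is \<infinity>).\<close>

definition walk :: "(complex \<times> complex) set \<Rightarrow> complex list \<Rightarrow> bool" where
  "walk Es p \<longleftrightarrow> p \<noteq> [] \<and> (\<forall>i < length p - 1. (p ! i, p ! Suc i) \<in> Es)"

definition walk_len :: "complex list \<Rightarrow> real" where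
  "walk_len p = (\<Sum>i < length p - 1. cmod (p ! Suc i - p ! i))"

definition sp_dist :: "(complex \<times> complex) set \<Rightarrow> complex \<Rightarrow> complex \<Rightarrow> ereal" where
  "sp_dist Es u v = (INF p \<in> {p. walk Es p \<and> hd p = u \<and> last p = v}. ereal (walk_len p))"

definition connected_graph :: "complex set \<Rightarrow> (complex \<times> complex) set \<Rightarrow> bool" where
  "connected_graph V Es \<longleftrightarrow> (\<forall>u\<in>V. \<forall>v\<in>V. \<exists>p. walk Es p \<and> hd p = u \<and> last p = v)"

definition is_length_spanner ::
  "complex set \<Rightarrow> (complex \<times> complex) set \<Rightarrow> (complex \<times> complex) set \<Rightarrow> real \<Rightarrow> bool" where
  "is_length_spanner V H G t \<longleftrightarrow> (\<forall>u\<in>V. \<forall>v\<in>V. sp_dist H u v \<le> ereal t * sp_dist G u v)"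

text \<open>Cones: k half-open cones of angle 2 pi / k with apex x, bounded by rays at
  angles phi + i * 2 pi / k (same directions at every node); cone number c is
  [phi + c theta, phi + (c+1) theta) modulo 2 pi.  The apex itself lies in no cone.\<close>

definition cone_idx :: "nat \<Rightarrow> real \<Rightarrow> complex \<Rightarrow> complex \<Rightarrow> nat" where
  "cone_idx k \<phi> x y = nat (\<lfloor>(Arg2pi (y - x) - \<phi>) / (2 * pi / real k)\<rfloor> mod int k)"

definition in_cone :: "nat \<Rightarrow> real \<Rightarrow> complex \<Rightarrow> nat \<Rightarrow> complex \<Rightarrow> bool" where
  "in_cone k \<phi> x c y \<longleftrightarrow> y \<noteq> x \<and> cone_idx k \<phi> x y = c"

definition dID :: "(complex \<Rightarrow> nat) \<Rightarrow> complex \<Rightarrow> complex \<Rightarrow> real \<times> nat \<times> nat" where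
  "dID idf x y = (cmod (x - y), idf x, idf y)"

definition uID :: "(complex \<Rightarrow> nat) \<Rightarrow> complex \<Rightarrow> complex \<Rightarrow> real \<times> nat \<times> nat" where
  "uID idf x y = min (dID idf x y) (dID idf y x)"

text \<open>Step 1: Yao step. (x,y) is the directed edge from x to y.\<close>

definition yao_edges :: "nat \<Rightarrow> real \<Rightarrow> (complex \<Rightarrow> nat) \<Rightarrow> complex set \<Rightarrow> (complex \<times> complex) set" where
  "yao_edges k \<phi> idf V = {(x, y). (x, y) \<in> udg_edges V \<and>
     (\<forall>z. (x, z) \<in> udg_edges V \<and> cone_idx k \<phi> x z = cone_idx k \<phi> x y \<longrightarrow> uID idf x y \<le> uID idf x z)}"

definition filt_F :: "nat \<Rightarrow> real \<Rightarrow> (complex \<Rightarrow> nat) \<Rightarrow> complex set \<Rightarrow> complex \<Rightarrow> nat \<Rightarrow> (complex \<times> complex) set" where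
  "filt_F k \<phi> idf V v c = {(x, w). (x, w) \<in> yao_edges k \<phi> idf V \<and> w = v \<and> in_cone k \<phi> v c x}"

definition in_bucket :: "real \<Rightarrow> real \<Rightarrow> nat \<Rightarrow> real \<Rightarrow> bool" where
  "in_bucket r L i d \<longleftrightarrow> L * r ^ (i - 1) \<le> d \<and> d < L * r ^ i"

definition ye_edges :: "nat \<Rightarrow> real \<Rightarrow> real \<Rightarrow> (complex \<Rightarrow> nat) \<Rightarrow> complex set \<Rightarrow> (complex \<times> complex) set" where
  "ye_edges k r \<phi> idf V = {(a, v). \<exists>c. (a, v) \<in> filt_F k \<phi> idf V v c \<and>
     (let F = filt_F k \<phi> idf V v c;
          L = Min ((\<lambda>(x, y). cmod (x - y)) ` F)
      in \<exists>i\<ge>1. in_bucket r L i (cmod (a - v)) \<and>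
           (\<forall>(b, w) \<in> F. in_bucket r L i (cmod (b - w)) \<longrightarrow> dID idf a v \<le> dID idf b w))}"

text \<open>Step 3: sink step. sink_tree x S e holds iff e is an edge of the tree built
  at x from the vertex set S (the set I(x) without x): for each cone of x meeting S, the
  vertex w of S in that cone minimising ID of w to x is linked to x, and recursively the
  tree at w is built from the remaining vertices of S in that cone.\<close>

inductive sink_tree :: "nat \<Rightarrow> real \<Rightarrow> (complex \<Rightarrow> nat) \<Rightarrow> complex \<Rightarrow> complex set \<Rightarrow> complex \<times> complex \<Rightarrow> bool"
  for k \<phi> idf where
  edge: "\<lbrakk> w \<in> S; in_cone k \<phi> x c w;
          \<forall>y\<in>S. in_cone k \<phi> x c y \<longrightarrow> dID idf w x \<le> dID idf y x \<rbrakk>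
         \<Longrightarrow> sink_tree k \<phi> idf x S (w, x)"
| rec: "\<lbrakk> w \<in> S; in_cone k \<phi> x c w;
          \<forall>y\<in>S. in_cone k \<phi> x c y \<longrightarrow> dID idf w x \<le> dID idf y x;
          sink_tree k \<phi> idf w {y \<in> S. in_cone k \<phi> x c y \<and> y \<noteq> w} e \<rbrakk>
         \<Longrightarrow> sink_tree k \<phi> idf x S e"

definition yes_edges :: "nat \<Rightarrow> real \<Rightarrow> real \<Rightarrow> (complex \<Rightarrow> nat) \<Rightarrow> complex set \<Rightarrow> (complex \<times> complex) set" where
  "yes_edges k r \<phi> idf V = {e. \<exists>v\<in>V. \<exists>c<k.
     sink_tree k \<phi> idf v {x. (x, v) \<in> ye_edges k r \<phi> idf V \<and> in_cone k \<phi> v c x} e}"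

definition YES :: "nat \<Rightarrow> real \<Rightarrow> real \<Rightarrow> (complex \<Rightarrow> nat) \<Rightarrow> complex set \<Rightarrow> (complex \<times> complex) set" where
  "YES k r \<phi> idf V = yes_edges k r \<phi> idf V \<union> (yes_edges k r \<phi> idf V)\<inverse>"

definition degree :: "(complex \<times> complex) set \<Rightarrow> complex \<Rightarrow> nat" where
  "degree Es v = card {u. (v, u) \<in> Es}"

end

theory Submission
  imports Defs
begin

lemma cone_angle:
  fixes k :: nat
  assumes k: "k \<ge> 2" and eq: "cone_idx k \<phi> x y = cone_idx k \<phi> x z"
  shows "cos (Arg2pi (y-x) - Arg2pi (z-x)) \<ge> cos (2*pi/k)"
proof -
  define \<theta> where "\<theta> = 2*pi/real k"
  have th0: "\<theta> > 0" using k by (simp add: \<theta>_def)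
  define A where "A = (Arg2pi (y - x) - \<phi>) / \<theta>"
  define B where "B = (Arg2pi (z - x) - \<phi>) / \<theta>"
  have "\<lfloor>A\<rfloor> mod int k = \<lfloor>B\<rfloor> mod int k"
    using eq k unfolding cone_idx_def A_def B_def \<theta>_def
    by (simp add: nat_eq_iff2)
  then have "int k dvd (\<lfloor>A\<rfloor> - \<lfloor>B\<rfloor>)" by (simp add: mod_eq_dvd_iff)
  then obtain m where m: "\<lfloor>A\<rfloor> - \<lfloor>B\<rfloor> = int k * m" by (auto elim: dvdE)
  have "A - B > real_of_int (\<lfloor>A\<rfloor> - \<lfloor>B\<rfloor>) - 1" "A - B < real_of_int (\<lfloor>A\<rfloor> - \<lfloor>B\<rfloor>) + 1"
    by linarith+
  then have ab: "A - B > real k * m - 1" "A - B < real k * m + 1" using m by (simp_all add: of_int_mult)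
  define \<delta> where "\<delta> = Arg2pi (y-x) - Arg2pi (z-x) - 2*pi*m"
  have diff: "Arg2pi (y-x) - Arg2pi (z-x) = \<theta> * (A - B)"
    using th0 by (simp add: A_def B_def field_simps)
  have e: "\<theta> * (real k * m) = 2*pi*m" using k unfolding \<theta>_def by (simp add: field_simps)
  have dl: "\<delta> = \<theta>*(A-B) - \<theta>*(real k * m)" unfolding \<delta>_def using diff e by linarith
  moreover have "\<theta>*(A-B) > \<theta>*(real k * m - 1)" "\<theta>*(A-B) < \<theta>*(real k * m + 1)"
    using ab th0 by (auto intro: mult_strict_left_mono)
  ultimately have "\<bar>\<delta>\<bar> < \<theta>"
    unfolding dl by (simp add: right_diff_distrib distrib_left abs_less_iff)
  have "\<theta> \<le> pi" using k unfolding \<theta>_def by (simp add: field_simps)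
  then have "cos \<theta> \<le> cos \<bar>\<delta>\<bar>"
    using \<open>\<bar>\<delta>\<bar> < \<theta>\<close> by (intro cos_monotone_0_pi_le) auto
  also have "cos \<bar>\<delta>\<bar> = cos (Arg2pi (y-x) - Arg2pi (z-x))"
  proof -
    have "Arg2pi (y-x) - Arg2pi (z-x) = \<delta> + 2*pi*m" by (simp add: \<delta>_def)
    moreover have "cos (\<delta> + 2*pi*m) = cos \<delta>"
      by (simp add: cos_add)
    ultimately show ?thesis by simp
  qed
  finally show ?thesis by (simp add: \<theta>_def)
qed

lemma cmod_diff_sq:
  "(cmod (a - b))^2 = (cmod a)^2 + (cmod b)^2 - 2 * cmod a * cmod b * cos (Arg2pi a - Arg2pi b)"
proof -
  have ra: "Re a = cmod a * cos (Arg2pi a)" "Im a = cmod a * sin (Arg2pi a)"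
    using cos_Arg2pi[of a] sin_Arg2pi[of a] by simp_all
  have rb: "Re b = cmod b * cos (Arg2pi b)" "Im b = cmod b * sin (Arg2pi b)"
    using cos_Arg2pi[of b] sin_Arg2pi[of b] by simp_all
  have "(cmod (a - b))^2 = (Re a - Re b)^2 + (Im a - Im b)^2"
    by (simp add: cmod_power2)
  also have "\<dots> = (Re a^2 + Im a^2) + (Re b^2 + Im b^2) - 2 * (Re a * Re b + Im a * Im b)"
    by (simp add: power2_eq_square algebra_simps)
  also have "\<dots> = (cmod a)^2 + (cmod b)^2 - 2 * (Re a * Re b + Im a * Im b)"
    by (simp only: cmod_power2)
  also have "Re a * Re b + Im a * Im b = cmod a * cmod b * cos (Arg2pi a - Arg2pi b)"
  proof -
    have "Re a * Re b + Im a * Im b = (cmod a * cos (Arg2pi a)) * (cmod b * cos (Arg2pi b)) + (cmod a * sin (Arg2pi a)) * (cmod b * sin (Arg2pi b))"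
      by (simp only: ra(1)[symmetric] ra(2)[symmetric] rb(1)[symmetric] rb(2)[symmetric])
    also have "\<dots> = cmod a * cmod b * cos (Arg2pi a - Arg2pi b)"
      unfolding cos_diff by (simp add: algebra_simps)
    finally show ?thesis .
  qed
  finally show ?thesis by simp
qed

lemma cone_geom:
  fixes k :: nat
  assumes k: "k \<ge> 2" and eq: "cone_idx k \<phi> x y = cone_idx k \<phi> x z"
    and le: "cmod (z-x) \<le> cmod (y-x)" and s0: "0 \<le> sin (2*pi/k)"
  shows "cmod (y - z) \<le> cmod (y-x) - cmod (z-x) * (cos (2*pi/k) - sin (2*pi/k))"
proof -
  define a where "a = y - x"
  define b where "b = z - x"
  define c where "c = cos (2*pi/k)"
  define s where "s = sin (2*pi/k)"
  have cs: "c^2 + s^2 = 1" by (simp add: c_def s_def)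
  have c1: "c \<le> 1" by (simp add: c_def)
  have yz: "y - z = a - b" by (simp add: a_def b_def)
  have C: "cos (Arg2pi a - Arg2pi b) \<ge> c" using cone_angle[OF k eq] by (simp add: a_def b_def c_def)
  have na: "cmod a \<ge> 0" "cmod b \<ge> 0" by auto
  have "(cmod (a - b))^2 \<le> (cmod a)^2 + (cmod b)^2 - 2 * cmod a * cmod b * c"
  proof -
    have "cmod a * cmod b * c \<le> cmod a * cmod b * cos (Arg2pi a - Arg2pi b)"
      by (rule mult_left_mono) (simp_all add: C)
    then show ?thesis unfolding cmod_diff_sq by linarith
  qed
  also have "\<dots> \<le> (cmod a - cmod b * (c - s))^2"
  proof -
    have "cmod b * c \<le> cmod b" using mult_left_le[OF c1 na(2)] .
    moreover have "cmod b \<le> cmod a" using le by (simp add: a_def b_def)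
    ultimately have f1: "0 \<le> cmod a - cmod b * c" by linarith
    have f2: "0 \<le> cmod b * s" using s0 na(2) unfolding s_def by (rule mult_nonneg_nonneg[rotated])
    have "0 \<le> 2 * (cmod b * s * (cmod a - cmod b * c))" using mult_nonneg_nonneg[OF f2 f1] by linarith
    moreover have e: "(cmod a - cmod b * (c - s))^2 = (cmod a)^2 + (cmod b)^2*(c^2+s^2) - 2*cmod a*cmod b*c
       + 2 * (cmod b * s * (cmod a - cmod b * c))"
      by (simp add: power2_eq_square algebra_simps)
    ultimately show ?thesis unfolding e cs by linarith
  qed
  finally have sq: "(cmod (a - b))^2 \<le> (cmod a - cmod b * (c - s))^2" .
  have "cmod b * (c - s) \<le> cmod a"
  proof -
    have "c - s \<le> 1" using c1 s0 s_def by simp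
    have "cmod b * (c - s) \<le> cmod b * 1" if "c - s \<ge> 0"
      using \<open>c - s \<le> 1\<close> na by (intro mult_left_mono) auto
    moreover have "cmod b * (c - s) \<le> 0" if "c - s < 0"
      using that na by (simp add: mult_nonneg_nonpos)
    moreover have "cmod b \<le> cmod a" using le by (simp add: a_def b_def)
    ultimately show ?thesis using norm_ge_zero[of a] by (cases "c - s \<ge> 0") linarith+
  qed
  then have "cmod (a - b) \<le> cmod a - cmod b * (c - s)"
    using power2_le_imp_le[OF sq] by linarith
  then have "cmod (y - z) \<le> cmod a - cmod b * (c - s)" by (simp only: yz)
  then show ?thesis by (simp only: a_def b_def c_def s_def)
qed

inductive hpath :: "(complex \<times> complex) set \<Rightarrow> complex \<Rightarrow> complex \<Rightarrow> real \<Rightarrow> bool" for H where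
  hrefl: "hpath H u u 0"
| hstep: "(u, w) \<in> H \<Longrightarrow> hpath H w v D \<Longrightarrow> hpath H u v (cmod (w - u) + D)"

lemma hpath_trans: "hpath H u w D1 \<Longrightarrow> hpath H w v D2 \<Longrightarrow> hpath H u v (D1 + D2)"
  by (induction rule: hpath.induct) (auto simp: add.assoc intro: hpath.hstep)

lemma hpath_edge: "(u, v) \<in> H \<Longrightarrow> hpath H u v (cmod (v - u))"
  using hpath.hstep[OF _ hpath.hrefl] by fastforce

lemma hpath_mono: "hpath H u v D \<Longrightarrow> H \<subseteq> H' \<Longrightarrow> hpath H' u v D"
  by (induction rule: hpath.induct) (auto intro: hpath.intros)

lemma hpath_nonneg: "hpath H u v D \<Longrightarrow> D \<ge> 0"
  by (induction rule: hpath.induct) auto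

lemma walk_single: "walk H [u]" by (simp add: walk_def)
lemma walk_len_single: "walk_len [u] = 0" by (simp add: walk_len_def)

lemma walk_cons: "walk H (a # b # p) \<longleftrightarrow> (a, b) \<in> H \<and> walk H (b # p)"
proof -
  have "(\<forall>i < length (a # b # p) - 1. ((a#b#p) ! i, (a#b#p) ! Suc i) \<in> H) \<longleftrightarrow>
        (a, b) \<in> H \<and> (\<forall>i < length (b # p) - 1. ((b#p) ! i, (b#p) ! Suc i) \<in> H)"
    by (auto simp: less_Suc_eq_0_disj)
  then show ?thesis by (simp add: walk_def)
qed

lemma walk_len_cons: "walk_len (a # b # p) = cmod (b - a) + walk_len (b # p)"
proof -
  have "walk_len (a # b # p) = (\<Sum>i < Suc (length p). cmod ((a#b#p) ! Suc i - (a#b#p) ! i))"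
    by (simp add: walk_len_def)
  also have "\<dots> = cmod (b - a) + (\<Sum>i < length p. cmod ((b#p) ! Suc i - (b#p) ! i))"
    by (subst sum.lessThan_Suc_shift) simp
  finally show ?thesis by (simp add: walk_len_def)
qed

lemma hpath_walk: "hpath H u v D \<Longrightarrow> \<exists>p. walk H p \<and> hd p = u \<and> last p = v \<and> walk_len p = D"
proof (induction rule: hpath.induct)
  case (hrefl u)
  then show ?case using walk_single walk_len_single by fastforce
next
  case (hstep u w v D)
  then obtain p where p: "walk H p" "hd p = w" "last p = v" "walk_len p = D" by blast
  then obtain q where q: "p = w # q" by (cases p) (auto simp: walk_def)
  have "walk H (u # p)" using p q hstep.hyps(1) by (simp add: walk_cons)
  moreover have "walk_len (u # p) = cmod (w - u) + D" using p q by (simp add: walk_len_cons)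
  ultimately show ?case using p q by (intro exI[of _ "u # p"]) auto
qed

lemma walk_to_hpath:
  assumes t: "t \<ge> 0" and E: "\<And>a b. (a, b) \<in> Es \<Longrightarrow> \<exists>D \<le> t * cmod (b - a). hpath H a b D"
  shows "walk Es p \<Longrightarrow> \<exists>D \<le> t * walk_len p. hpath H (hd p) (last p) D"
proof (induction p rule: induct_list012)
  case 1
  then show ?case by (simp add: walk_def)
next
  case (2 x)
  then show ?case using hpath.hrefl by (auto simp: walk_len_single)
next
  case (3 x y zs)
  then have e: "(x, y) \<in> Es" and w: "walk Es (y # zs)" by (auto simp: walk_cons)
  obtain D1 where D1: "D1 \<le> t * cmod (y - x)" "hpath H x y D1" using E[OF e] by blast
  obtain D2 where D2: "D2 \<le> t * walk_len (y # zs)" "hpath H y (last (y # zs)) D2" using 3(2)[OF w] by auto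
  have "hpath H x (last (x # y # zs)) (D1 + D2)" using hpath_trans[OF D1(2) D2(2)] by simp
  moreover have "D1 + D2 \<le> t * walk_len (x # y # zs)" using D1 D2 by (simp add: walk_len_cons distrib_left)
  ultimately show ?case by auto
qed

lemma dID_le_fst: "dID idf a b \<le> dID idf c d \<Longrightarrow> cmod (a - b) \<le> cmod (c - d)"
  by (auto simp: dID_def less_eq_prod_def)

lemma obtain_min:
  fixes f :: "'a \<Rightarrow> 'b::linorder"
  assumes "finite C" "C \<noteq> {}"
  obtains w where "w \<in> C" "\<And>z. z \<in> C \<Longrightarrow> f w \<le> f z"
proof -
  have "Min (f ` C) \<in> f ` C" using assms by (intro Min_in) auto
  then obtain w where "w \<in> C" "f w = Min (f ` C)" by auto
  moreover have "\<And>z. z \<in> C \<Longrightarrow> Min (f ` C) \<le> f z" using assms by (intro Min_le) auto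
  ultimately show ?thesis using that by auto
qed

lemma sink_reach:
  fixes k :: nat
  assumes k: "k \<ge> 2" and s0: "0 \<le> sin (2*pi/k)"
    and d0: "cos (2*pi/k) - sin (2*pi/k) > 0"
  shows "finite S \<Longrightarrow> x \<notin> S \<Longrightarrow> (\<And>e. sink_tree k \<phi> idf x S e \<Longrightarrow> e \<in> H) \<Longrightarrow> y \<in> S \<Longrightarrow>
     \<exists>D \<le> cmod (y - x) / (cos (2*pi/k) - sin (2*pi/k)). hpath H y x D"
proof (induction "card S" arbitrary: x S y rule: less_induct)
  case less
  define d where "d = cos (2*pi/k) - sin (2*pi/k)"
  have d0': "d > 0" using d0 by (simp add: d_def)
  have d1: "d \<le> 1" using s0 by (simp add: d_def) (smt (verit) cos_le_one)
  define c where "c = cone_idx k \<phi> x y"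
  define C where "C = {z \<in> S. in_cone k \<phi> x c z}"
  have yC: "y \<in> C" using less.prems by (auto simp: C_def c_def in_cone_def)
  have fC: "finite C" using less.prems(1) by (simp add: C_def)
  obtain w where wC: "w \<in> C" and wmin: "\<And>z. z \<in> C \<Longrightarrow> dID idf w x \<le> dID idf z x"
    using obtain_min[OF fC, of "\<lambda>z. dID idf z x"] yC by blast
  have wS: "w \<in> S" and wc: "in_cone k \<phi> x c w" using wC by (auto simp: C_def)
  have tree_w: "sink_tree k \<phi> idf x S (w, x)"
    by (rule sink_tree.edge[OF wS wc]) (auto intro: wmin simp: C_def)
  then have eH: "(w, x) \<in> H" using less.prems(3) by blast
  have wle: "cmod (w - x) \<le> cmod (y - x)" using wmin[OF yC] by (rule dID_le_fst)
  show ?case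
  proof (cases "y = w")
    case True
    have "cmod (y - x) \<le> cmod (y - x) / d" using d0' d1
      by (simp add: le_divide_eq mult_left_le)
    then show ?thesis using hpath_edge[OF eH] True unfolding d_def
      by (metis norm_minus_commute)
  next
    case False
    define S' where "S' = {z \<in> S. in_cone k \<phi> x c z \<and> z \<noteq> w}"
    have yS': "y \<in> S'" using yC False by (simp add: S'_def C_def)
    have sub: "S' \<subset> S" using wS by (auto simp: S'_def)
    have lt: "card S' < card S" using psubset_card_mono[OF less.prems(1) sub] .
    have fS': "finite S'" using less.prems(1) by (simp add: S'_def)
    have wS': "w \<notin> S'" by (simp add: S'_def)
    have tr: "\<And>e. sink_tree k \<phi> idf w S' e \<Longrightarrow> e \<in> H"
    proof -
      fix e assume "sink_tree k \<phi> idf w S' e"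
      then have "sink_tree k \<phi> idf x S e"
        by (intro sink_tree.rec[OF wS wc]) (auto intro: wmin simp: C_def S'_def)
      then show "e \<in> H" using less.prems(3) by blast
    qed
    obtain D1 where D1: "D1 \<le> cmod (y - w) / d" "hpath H y w D1"
      using less.hyps[OF lt fS' wS' tr yS'] unfolding d_def by blast
    have cw: "cone_idx k \<phi> x w = c" using wc by (simp add: in_cone_def)
    have geo: "cmod (y - w) \<le> cmod (y - x) - cmod (w - x) * d"
      using cone_geom[OF k _ wle s0, of \<phi>] cw unfolding d_def c_def by simp
    have "hpath H y x (D1 + cmod (x - w))"
      using hpath_trans[OF D1(2) hpath_edge[OF eH]] .
    moreover have "D1 + cmod (x - w) \<le> cmod (y - x) / d"
    proof -
      have "D1 \<le> (cmod (y - x) - cmod (w - x) * d) / d"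
        using D1(1) geo d0' by (smt (verit) divide_right_mono)
      also have "\<dots> = cmod (y - x) / d - cmod (w - x)" using d0' by (simp add: field_simps)
      finally show ?thesis by (simp add: norm_minus_commute)
    qed
    ultimately show ?thesis unfolding d_def by blast
  qed
qed

lemma key_poly:
  fixes c s r :: real
  assumes cs: "c^2 + s^2 = 1" and s0: "0 \<le> s" and sc: "s < c" and r1: "1 < r"
  shows "(r+1)*(c-s) - r - (c+s)*((1+2*r*c)*(c-s) - 2*r*c) \<ge> 0"
proof -
  define d where "d = c - s"
  define X where "X = 2*c*(c+s) - 1"
  have c1: "c \<le> 1" using cs s0 by (smt (verit) power2_le_imp_le one_power2 zero_le_power2)
  have "s * s \<le> c * c" using sc s0 by (intro mult_mono) auto
  then have cc: "2*(c*c) \<ge> 1" using cs by (simp add: power2_eq_square)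
  have "c * s \<ge> 0" using sc s0 by simp
  then have X0: "X \<ge> 0" unfolding X_def using cc by (simp add: algebra_simps)
  have d0: "0 \<le> d" "d \<le> 1" using sc s0 c1 by (auto simp: d_def)
  have id1: "(r+1)*(c-s) - r - (c+s)*((1+2*r*c)*(c-s) - 2*r*c) = r*(1-d)*X - d*(c+s-1)"
    unfolding d_def X_def by (simp add: algebra_simps)
  have id2: "(1-d)*X - d*(c+s-1) = 2 * s * (c - d^2)"
    unfolding d_def X_def using cs by algebra
  have p: "0 \<le> (1-d)*X" using X0 d0 by simp
  have "0 \<le> (r - 1)*((1-d)*X)" using p r1 by simp
  then have "(1-d)*X \<le> r*((1-d)*X)" by (simp add: left_diff_distrib)
  moreover have "d^2 \<le> c" using d0 by (smt (verit) d_def s0 power2_eq_square mult_left_le)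
  then have "2 * s * (c - d^2) \<ge> 0" using s0 by simp
  ultimately show ?thesis using id1 id2 by (simp add: mult.assoc)
qed

lemma const_key:
  fixes c s r lam t :: real
  assumes cs: "c^2 + s^2 = 1" and s0: "0 \<le> s" and c0: "0 < c" and r1: "1 < r"
    and lam: "lam = 1 / (2 * r * c)"
    and hyp: "c - s > 1 / (lam + 1)"
    and tt: "t \<ge> (lam / (c^2 - s^2)) / ((lam + 1) * (c - s) - 1)"
  shows "c - s > 0 \<and> (c - s) * (r + 1) - r > 0 \<and> t * (c - s) * ((c - s) * (r + 1) - r) \<ge> 1"
proof -
  define d where "d = c - s"
  have lam0: "lam > 0" using lam c0 r1 by simp
  have d0: "d > 0" using hyp lam0 unfolding d_def by (smt (verit) divide_pos_pos)
  have "1 < (lam + 1) * d" using hyp lam0 unfolding d_def by (simp add: divide_less_eq mult.commute)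
  define e where "e = (lam + 1) * d - 1"
  have e0: "e > 0" using \<open>1 < (lam + 1) * d\<close> by (simp add: e_def)
  have sc: "s < c" using d0 by (simp add: d_def)
  have "s * s \<le> c * c" using sc s0 by (intro mult_mono) auto
  then have cc: "2 * (c * c) \<ge> 1" using cs by (simp add: power2_eq_square)
  have c2: "2 * c \<ge> 1"
  proof (rule ccontr)
    assume "\<not> 2 * c \<ge> 1"
    then have "2 * c < 1" by simp
    then have "(2 * c) * (2 * c) < 1 * 1" using c0 by (intro mult_strict_mono) auto
    then show False using cc by simp
  qed
  have lamr: "lam \<le> 1 / r" unfolding lam using c2 r1 c0
    by (simp add: divide_simps)
  have q0: "d * (r + 1) - r > 0"
  proof -
    have "(lam + 1) * d \<le> (1 / r + 1) * d" using lamr d0 by (intro mult_right_mono) auto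
    then have "1 < (1 / r + 1) * d" using \<open>1 < (lam + 1) * d\<close> by linarith
    then have "r < r * ((1 / r + 1) * d)" using r1 by simp
    also have "r * ((1 / r + 1) * d) = d * (r + 1)" using r1 by (simp add: field_simps)
    finally show ?thesis by simp
  qed
  define q where "q = d * (r + 1) - r"
  have kp: "(r+1)*(c-s) - r - (c+s)*((1+2*r*c)*(c-s) - 2*r*c) \<ge> 0" by (rule key_poly[OF cs s0 sc r1])
  have "(1+2*r*c)*(c-s) - 2*r*c = 2*r*c*e"
    unfolding e_def d_def lam using c0 r1 by (simp add: field_simps)
  then have "q \<ge> (c + s) * (2 * r * c * e)" using kp by (simp add: q_def d_def mult.commute)
  then have "lam * q \<ge> lam * ((c + s) * (2 * r * c * e))" using lam0 by (simp add: mult_left_mono)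
  also have "lam * ((c + s) * (2 * r * c * e)) = (c + s) * e" unfolding lam using c0 r1 by (simp add: field_simps)
  finally have lq: "lam * q \<ge> (c + s) * e" .
  have cs2: "c^2 - s^2 = d * (c + s)" by (simp add: d_def power2_eq_square algebra_simps)
  have cps: "c + s > 0" using c0 s0 by simp
  define t0 where "t0 = (lam / (c^2 - s^2)) / ((lam + 1) * (c - s) - 1)"
  have t0e: "t0 * d * q = lam * q / ((c + s) * e)"
  proof -
    have ee: "(lam + 1) * (c - s) - 1 = e" by (simp add: e_def d_def)
    have "t0 = lam / (d * (c + s)) / e" unfolding t0_def cs2 ee ..
    moreover have "\<And>u. u > 0 \<Longrightarrow> lam / (d * u) / e * d * q = lam * q / (u * e)"
      using d0 e0 by (simp add: field_simps)
    ultimately show ?thesis using cps by simp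
  qed
  have "t0 * d * q \<ge> 1" unfolding t0e using lq cps e0 by (simp add: le_divide_eq)
  moreover have "t * d * q \<ge> t0 * d * q"
  proof -
    have "t0 \<le> t" using tt unfolding t0_def .
    moreover have "d * q \<ge> 0" using d0 q0 unfolding q_def by simp
    ultimately have "t0 * (d * q) \<le> t * (d * q)" by (rule mult_right_mono)
    then show ?thesis by (simp add: mult.assoc)
  qed
  ultimately show ?thesis using d0 q0 unfolding d_def q_def by linarith
qed

lemma final_ineq:
  fixes t d r A b :: real
  assumes d0: "d > 0" and d1: "d \<le> 1" and r1: "r > 1" and key: "t * d * (d * (r + 1) - r) \<ge> 1"
    and q0: "d * (r + 1) - r > 0" and Ab: "A < r * b" and bA: "b \<le> A" and b0: "b > 0"
  shows "t * (A - b * d) + b / d \<le> t * d * A"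
proof -
  define q where "q = d * (r + 1) - r"
  have t0: "t > 0" using key d0 q0 by (smt (verit) mult_nonpos_nonneg mult_nonneg_nonpos q_def mult_pos_neg zero_less_mult_pos)
  have qd: "d - q = r * (1 - d)" by (simp add: q_def algebra_simps)
  have "t * d * d - 1 \<ge> t * d * d - t * d * q" using key by (simp add: q_def)
  also have "t * d * d - t * d * q = t * d * (d - q)" by (simp add: algebra_simps)
  also have "\<dots> = t * d * (r * (1 - d))" using qd by simp
  finally have h1: "t * d * d - 1 \<ge> t * d * r * (1 - d)" by (simp add: mult.assoc)
  have tdr: "t * d * (1 - d) \<ge> 0" using t0 d0 d1 by simp
  have "A * (t * d * (1 - d)) \<le> (r * b) * (t * d * (1 - d))" using Ab tdr by (simp add: mult_right_mono)
  also have "(r * b) * (t * d * (1 - d)) = b * (t * d * r * (1 - d))" by (simp add: algebra_simps)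
  also have "\<dots> \<le> b * (t * d * d - 1)" using h1 b0 by (simp add: mult_left_mono)
  finally have h2: "b * (t * d * d - 1) \<ge> A * (t * d * (1 - d))" .
  have "d * (t * (A - b * d) + b / d) = t * d * A - b * (t * d * d - 1)" using d0 by (simp add: field_simps)
  also have "\<dots> \<le> t * d * A - A * (t * d * (1 - d))" using h2 by simp
  also have "\<dots> = d * (t * d * A)" by (simp add: algebra_simps)
  finally show ?thesis using d0 by (simp add: mult_le_cancel_left_pos)
qed

lemma fst_uID: "fst (uID idf x y) = cmod (x - y)"
  by (simp add: uID_def dID_def min_def norm_minus_commute)

lemma uID_le_fst: "uID idf u w \<le> uID idf u v \<Longrightarrow> cmod (u - w) \<le> cmod (u - v)"
  by (metis fst_uID less_eq_prod_def order.strict_implies_order order.refl)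

lemma cone_idx_lt: "k > 0 \<Longrightarrow> cone_idx k \<phi> x y < k"
  unfolding cone_idx_def by (simp add: nat_less_iff)

locale yes_setup =
  fixes V :: "complex set" and idf :: "complex \<Rightarrow> nat" and k :: nat and r \<phi> t :: real
  assumes finV: "finite V" and inj: "inj_on idf V" and k2: "k \<ge> 2"
    and s0: "0 \<le> sin (2*pi/k)" and d0: "cos (2*pi/k) - sin (2*pi/k) > 0"
    and r1: "r > 1"
    and key: "t * (cos (2*pi/k) - sin (2*pi/k)) * ((cos (2*pi/k) - sin (2*pi/k)) * (r + 1) - r) \<ge> 1"
    and q0: "(cos (2*pi/k) - sin (2*pi/k)) * (r + 1) - r > 0"
begin

abbreviation "d \<equiv> cos (2*pi/k) - sin (2*pi/k)"
abbreviation "H \<equiv> YES k r \<phi> idf V"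
abbreviation "Gd \<equiv> udg_edges V"

lemma d1: "d \<le> 1" using s0 by (smt (verit) cos_le_one)

lemma t0: "t > 0" using key d0 q0
  by (smt (verit) mult_nonpos_nonneg mult_nonneg_nonpos mult_pos_neg zero_less_mult_pos)

lemma ye_sub: "ye_edges k r \<phi> idf V \<subseteq> yao_edges k \<phi> idf V"
  by (auto simp: ye_edges_def filt_F_def)

lemma yao_sub: "yao_edges k \<phi> idf V \<subseteq> Gd"
  by (auto simp: yao_edges_def)

lemma Gd_sub: "Gd \<subseteq> V \<times> V" by (auto simp: udg_edges_def)

lemma yes_sub_H: "yes_edges k r \<phi> idf V \<subseteq> H" by (simp add: YES_def)

lemma L_ye:
  assumes av: "(a, v) \<in> ye_edges k r \<phi> idf V"
  shows "\<exists>D \<le> cmod (a - v) / d. hpath H a v D"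
proof -
  obtain c where "(a, v) \<in> filt_F k \<phi> idf V v c" using av by (auto simp: ye_edges_def)
  then have ic: "in_cone k \<phi> v c a" and vV: "v \<in> V" by (auto simp: filt_F_def yao_edges_def udg_edges_def)
  have ck: "c < k" using ic cone_idx_lt[of k] k2 by (auto simp: in_cone_def)
  define S where "S = {x. (x, v) \<in> ye_edges k r \<phi> idf V \<and> in_cone k \<phi> v c x}"
  have fS: "finite S"
  proof -
    have "S \<subseteq> fst ` Gd" using ye_sub yao_sub by (force simp: S_def)
    moreover have "finite Gd" using Gd_sub finV by (meson finite_SigmaI finite_subset)
    ultimately show ?thesis by (meson finite_imageI finite_subset)
  qed
  have vS: "v \<notin> S" by (simp add: S_def in_cone_def)
  have aS: "a \<in> S" using av ic by (simp add: S_def)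
  have tr: "\<And>e. sink_tree k \<phi> idf v S e \<Longrightarrow> e \<in> H"
    using vV ck yes_sub_H unfolding yes_edges_def S_def by blast
  show ?thesis using sink_reach[OF k2 s0 d0 fS vS tr aS] .
qed

lemma finGd: "finite Gd" using Gd_sub finV by (meson finite_SigmaI finite_subset)

lemma bucket_exists:
  fixes L X :: real
  assumes L0: "L > 0" and LX: "L \<le> X"
  shows "\<exists>i\<ge>1. in_bucket r L i X"
proof -
  obtain n where "X / L < r ^ n" using real_arch_pow[OF r1] by blast
  then have ex: "X < L * r ^ n" using L0 by (simp add: divide_less_eq mult.commute)
  define i where "i = (LEAST n. X < L * r ^ n)"
  have i1: "X < L * r ^ i" unfolding i_def by (rule LeastI[of _ n]) (rule ex)
  have "i \<noteq> 0"
  proof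
    assume "i = 0" then show False using i1 LX by simp
  qed
  then have ige: "i \<ge> 1" by simp
  have "\<not> X < L * r ^ (i - 1)"
  proof
    assume "X < L * r ^ (i - 1)"
    then have "i \<le> i - 1" unfolding i_def by (rule Least_le)
    then show False using ige by simp
  qed
  then show ?thesis using i1 ige by (auto simp: in_bucket_def intro!: exI[of _ i])
qed

lemma L_yao:
  assumes xv: "(x, v) \<in> yao_edges k \<phi> idf V"
    and IH: "\<And>p q. (p, q) \<in> Gd \<Longrightarrow> cmod (p - q) < cmod (x - v) \<Longrightarrow> \<exists>D \<le> t * cmod (q - p). hpath H p q D"
  shows "\<exists>D \<le> t * d * cmod (x - v). hpath H x v D"
proof -
  define c where "c = cone_idx k \<phi> v x"
  define F where "F = filt_F k \<phi> idf V v c"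
  have xvG: "(x, v) \<in> Gd" using xv yao_sub by auto
  then have xnv: "x \<noteq> v" and xV: "x \<in> V" and vV: "v \<in> V" and xv1: "cmod (x - v) \<le> 1"
    by (auto simp: udg_edges_def)
  have xF: "(x, v) \<in> F" using xv xnv by (simp add: F_def filt_F_def in_cone_def c_def)
  have FG: "F \<subseteq> Gd" using yao_sub by (auto simp: F_def filt_F_def)
  have fF: "finite F" using finite_subset[OF FG finGd] .
  define L where "L = Min ((\<lambda>(x, y). cmod (x - y)) ` F)"
  have LX: "L \<le> cmod (x - v)" unfolding L_def using fF xF by (force intro: Min_le)
  have "L \<in> (\<lambda>(x, y). cmod (x - y)) ` F" unfolding L_def using fF xF by (intro Min_in) auto
  then have L0: "L > 0" using FG by (auto simp: udg_edges_def)
  obtain i where i1: "i \<ge> 1" and xb: "in_bucket r L i (cmod (x - v))"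
    using bucket_exists[OF L0 LX] by blast
  define B where "B = {(b, w) \<in> F. in_bucket r L i (cmod (b - w))}"
  have xB: "(x, v) \<in> B" using xF xb by (simp add: B_def)
  have fB: "finite B" using finite_subset[OF _ fF, of B] by (auto simp: B_def)
  obtain e where eB: "e \<in> B" and emin: "\<And>z. z \<in> B \<Longrightarrow> (\<lambda>(a, w). dID idf a w) e \<le> (\<lambda>(a, w). dID idf a w) z"
    using obtain_min[OF fB, of "\<lambda>(a, w). dID idf a w"] xB by blast
  obtain a w where e: "e = (a, w)" by (cases e)
  have wv: "w = v" using eB by (simp add: e B_def F_def filt_F_def)
  have aF: "(a, v) \<in> F" and ab: "in_bucket r L i (cmod (a - v))" using eB by (auto simp: e wv B_def)
  have amin: "\<And>b w'. (b, w') \<in> F \<Longrightarrow> in_bucket r L i (cmod (b - w')) \<Longrightarrow> dID idf a v \<le> dID idf b w'"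
    using emin by (force simp: e wv B_def)
  have aux: "\<exists>i\<ge>1. in_bucket r L i (cmod (a - v)) \<and>
      (\<forall>(b, w) \<in> F. in_bucket r L i (cmod (b - w)) \<longrightarrow> dID idf a v \<le> dID idf b w)"
    using i1 ab amin by blast
  have aye: "(a, v) \<in> ye_edges k r \<phi> idf V"
    unfolding ye_edges_def mem_Collect_eq prod.case Let_def
    apply (rule exI[of _ c])
    unfolding F_def[symmetric] L_def[symmetric] using aF aux by blast
  have avx: "cmod (a - v) \<le> cmod (x - v)" using amin[OF xF xb] by (rule dID_le_fst)
  have rb: "cmod (x - v) < r * cmod (a - v)"
  proof -
    have "cmod (x - v) < L * r ^ i" using xb by (simp add: in_bucket_def)
    also have "L * r ^ i = r * (L * r ^ (i - 1))" using i1 by (cases i) auto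
    also have "\<dots> \<le> r * cmod (a - v)" using ab r1 by (simp add: in_bucket_def)
    finally show ?thesis .
  qed
  have aG: "(a, v) \<in> Gd" using aF FG by auto
  then have anv: "a \<noteq> v" and aV: "a \<in> V" by (auto simp: udg_edges_def)
  have b0: "cmod (a - v) > 0" using anv by simp
  obtain D2 where D2: "D2 \<le> cmod (a - v) / d" "hpath H a v D2" using L_ye[OF aye] by blast
  show ?thesis
  proof (cases "a = x")
    case True
    have td: "t * d * d \<ge> 1"
    proof -
      have "d * r \<le> 1 * r" using d1 r1 by (intro mult_right_mono) auto
      then have "d * (r + 1) - r \<le> d" by (simp add: algebra_simps)
      then have "t * d * (d * (r + 1) - r) \<le> t * d * d"
        using t0 d0 by (intro mult_left_mono) auto
      then show ?thesis using key by linarith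
    qed
    have "cmod (x - v) / d \<le> t * d * cmod (x - v)"
    proof -
      have "cmod (x - v) \<le> (t * d * d) * cmod (x - v)" using td by (simp add: mult_le_cancel_right1)
      also have "(t * d * d) * cmod (x - v) = t * d * cmod (x - v) * d" by (simp add: algebra_simps)
      finally show ?thesis using d0 by (simp add: pos_divide_le_eq)
    qed
    then show ?thesis using D2 True by (intro exI[of _ D2]) auto
  next
    case False
    have cx: "cone_idx k \<phi> v a = cone_idx k \<phi> v x"
      using aF by (simp add: F_def filt_F_def in_cone_def c_def)
    have geo: "cmod (x - a) \<le> cmod (x - v) - cmod (a - v) * d"
      using cone_geom[OF k2 cx[symmetric] avx s0] .
    have "cmod (a - v) * d > 0" using b0 d0 by simp
    then have xa_lt: "cmod (x - a) < cmod (x - v)" using geo by linarith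
    have "(x, a) \<in> Gd" using xV aV False xa_lt xv1 by (auto simp: udg_edges_def)
    then obtain D1 where D1: "D1 \<le> t * cmod (a - x)" "hpath H x a D1" using IH xa_lt by blast
    have "hpath H x v (D1 + D2)" using hpath_trans[OF D1(2) D2(2)] .
    moreover have "D1 + D2 \<le> t * d * cmod (x - v)"
    proof -
      have "D1 \<le> t * (cmod (x - v) - cmod (a - v) * d)"
        using D1(1) geo t0 by (smt (verit) mult_left_mono norm_minus_commute)
      then have "D1 + D2 \<le> t * (cmod (x - v) - cmod (a - v) * d) + cmod (a - v) / d" using D2 by linarith
      also have "\<dots> \<le> t * d * cmod (x - v)"
        by (rule final_ineq[OF d0 d1 r1 key q0 rb avx b0])
      finally show ?thesis .
    qed
    ultimately show ?thesis by blast
  qed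
qed

lemma L_main: "(u, v) \<in> Gd \<Longrightarrow> \<exists>D \<le> t * cmod (v - u). hpath H u v D"
proof (induction "card {e \<in> Gd. (\<lambda>(p, q). cmod (p - q)) e < cmod (u - v)}" arbitrary: u v rule: less_induct)
  case less
  have IH: "\<exists>D \<le> t * cmod (q - p). hpath H p q D"
    if pq: "(p, q) \<in> Gd" and lt: "cmod (p - q) < cmod (u - v)" for p q
  proof -
    have sub: "{e \<in> Gd. (\<lambda>(p', q'). cmod (p' - q')) e < cmod (p - q)} \<subset>
               {e \<in> Gd. (\<lambda>(p', q'). cmod (p' - q')) e < cmod (u - v)}"
    proof (rule psubsetI)
      show "{e \<in> Gd. (\<lambda>(p', q'). cmod (p' - q')) e < cmod (p - q)} \<subseteq>
               {e \<in> Gd. (\<lambda>(p', q'). cmod (p' - q')) e < cmod (u - v)}" using lt by auto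
      have "(p, q) \<in> {e \<in> Gd. (\<lambda>(p', q'). cmod (p' - q')) e < cmod (u - v)}" using pq lt by simp
      moreover have "(p, q) \<notin> {e \<in> Gd. (\<lambda>(p', q'). cmod (p' - q')) e < cmod (p - q)}" by simp
      ultimately show "{e \<in> Gd. (\<lambda>(p', q'). cmod (p' - q')) e < cmod (p - q)} \<noteq>
               {e \<in> Gd. (\<lambda>(p', q'). cmod (p' - q')) e < cmod (u - v)}" by blast
    qed
    have "card {e \<in> Gd. (\<lambda>(p', q'). cmod (p' - q')) e < cmod (p - q)} <
          card {e \<in> Gd. (\<lambda>(p', q'). cmod (p' - q')) e < cmod (u - v)}"
      by (rule psubset_card_mono[OF _ sub]) (simp add: finGd)
    then show ?thesis using less.hyps pq by blast
  qed
  have uvG: "(u, v) \<in> Gd" by (rule less.prems)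
  then have unv: "u \<noteq> v" and uV: "u \<in> V" and vV: "v \<in> V" and uv1: "cmod (u - v) \<le> 1"
    by (auto simp: udg_edges_def)
  show ?case
  proof (cases "(u, v) \<in> yao_edges k \<phi> idf V")
    case True
    obtain D where D: "D \<le> t * d * cmod (u - v)" "hpath H u v D"
      using L_yao[OF True IH] by blast
    have "t * d * cmod (u - v) \<le> t * cmod (u - v)"
      using t0 d1 by (simp add: mult_left_le mult.commute mult.left_commute)
    then have "D \<le> t * cmod (v - u)" using D(1) by (simp add: norm_minus_commute)
    then show ?thesis using D(2) by blast
  next
    case False
    define c where "c = cone_idx k \<phi> u v"
    define Z where "Z = {z. (u, z) \<in> Gd \<and> cone_idx k \<phi> u z = c}"
    have vZ: "v \<in> Z" using uvG by (simp add: Z_def c_def)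
    have fZ: "finite Z"
    proof -
      have "Z \<subseteq> snd ` Gd" by (force simp: Z_def)
      then show ?thesis using finGd by (meson finite_imageI finite_subset)
    qed
    obtain w where wZ: "w \<in> Z" and wmin: "\<And>z. z \<in> Z \<Longrightarrow> uID idf u w \<le> uID idf u z"
      using obtain_min[OF fZ, of "uID idf u"] vZ by blast
    have uwG: "(u, w) \<in> Gd" and cw: "cone_idx k \<phi> u w = c" using wZ by (auto simp: Z_def)
    have uwY: "(u, w) \<in> yao_edges k \<phi> idf V"
      unfolding yao_edges_def using uwG wmin cw by (auto simp: Z_def)
    have wnv: "w \<noteq> v" using uwY False by auto
    have wV: "w \<in> V" and unw: "u \<noteq> w" using uwG by (auto simp: udg_edges_def)
    have uwle: "cmod (u - w) \<le> cmod (u - v)" using wmin[OF vZ] by (rule uID_le_fst)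
    have wle': "cmod (w - u) \<le> cmod (v - u)" using uwle by (simp add: norm_minus_commute)
    have eqc: "cone_idx k \<phi> u v = cone_idx k \<phi> u w" using cw by (simp add: c_def)
    have geo: "cmod (v - w) \<le> cmod (v - u) - cmod (w - u) * d"
      using cone_geom[OF k2 eqc wle' s0] .
    have "cmod (w - u) * d > 0" using unw d0 by simp
    then have wv_lt: "cmod (w - v) < cmod (u - v)" using geo by (simp add: norm_minus_commute)
    have wvG: "(w, v) \<in> Gd" using wV vV wnv wv_lt uv1 by (auto simp: udg_edges_def)
    obtain D2 where D2: "D2 \<le> t * cmod (v - w)" "hpath H w v D2" using IH[OF wvG wv_lt] by blast
    obtain D1 where D1: "D1 \<le> t * d * cmod (u - w)" "hpath H u w D1"
      using L_yao[OF uwY] IH uwle by (smt (verit))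
    have "hpath H u v (D1 + D2)" using hpath_trans[OF D1(2) D2(2)] .
    moreover have "D1 + D2 \<le> t * cmod (v - u)"
    proof -
      have "t * cmod (v - w) \<le> t * (cmod (v - u) - cmod (w - u) * d)" using geo t0 by simp
      then have "D1 + D2 \<le> t * d * cmod (u - w) + t * (cmod (v - u) - cmod (w - u) * d)"
        using D1 D2 by linarith
      also have "\<dots> = t * cmod (v - u)" by (simp add: norm_minus_commute algebra_simps)
      finally show ?thesis .
    qed
    ultimately show ?thesis by blast
  qed
qed

lemma spanner: "is_length_spanner V H Gd t"
  unfolding is_length_spanner_def
proof (intro ballI)
  fix u v assume uV: "u \<in> V" and vV: "v \<in> V"
  define W where "W = {p. walk Gd p \<and> hd p = u \<and> last p = v}"
  define Y where "Y = (INF p \<in> W. ereal (t * walk_len p))"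
  have tt: "t \<ge> 0" using t0 by simp
  have E: "\<And>a b. (a, b) \<in> Gd \<Longrightarrow> \<exists>D \<le> t * cmod (b - a). hpath H a b D" using L_main by blast
  have "sp_dist H u v \<le> ereal (t * walk_len p)" if pW: "p \<in> W" for p
  proof -
    have wp: "walk Gd p" and hp: "hd p = u" and lp: "last p = v" using pW by (auto simp: W_def)
    obtain D where D: "D \<le> t * walk_len p" "hpath H u v D" using walk_to_hpath[OF tt E wp] hp lp by blast
    obtain q where q: "walk H q" "hd q = u" "last q = v" "walk_len q = D" using hpath_walk[OF D(2)] by blast
    have "sp_dist H u v \<le> ereal (walk_len q)" unfolding sp_dist_def using q by (intro INF_lower) auto
    then show ?thesis using q(4) D(1) by (simp add: order_trans)
  qed
  then have hY: "sp_dist H u v \<le> Y" unfolding Y_def by (rule INF_greatest)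
  have "Y * ereal (1 / t) \<le> ereal (walk_len p)" if pW: "p \<in> W" for p
  proof -
    have "Y \<le> ereal (t * walk_len p)" unfolding Y_def using pW by (rule INF_lower)
    then have "Y * ereal (1 / t) \<le> ereal (t * walk_len p) * ereal (1 / t)"
      using t0 by (intro ereal_mult_right_mono) auto
    also have "\<dots> = ereal (walk_len p)" using t0 by simp
    finally show ?thesis .
  qed
  then have "Y * ereal (1 / t) \<le> sp_dist Gd u v" unfolding sp_dist_def W_def[symmetric] by (rule INF_greatest)
  then have "ereal t * (Y * ereal (1 / t)) \<le> ereal t * sp_dist Gd u v"
    using t0 by (intro ereal_mult_left_mono) auto
  also have "ereal t * (Y * ereal (1 / t)) = Y * (ereal t * ereal (1 / t))" by (simp add: mult_ac)
  also have "\<dots> = Y" using t0 by simp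
  finally show "sp_dist H u v \<le> ereal t * sp_dist Gd u v" using hY by simp
qed

end

lemma sink_endpoints: "sink_tree k \<phi> idf x S e \<Longrightarrow> fst e \<in> S \<and> (snd e = x \<or> snd e \<in> S)"
  by (induction rule: sink_tree.induct) auto

lemma dID_inj: "dID idf a x = dID idf b x \<Longrightarrow> a \<in> V \<Longrightarrow> b \<in> V \<Longrightarrow> inj_on idf V \<Longrightarrow> a = b"
  by (auto simp: dID_def inj_on_def)

lemma argmin_unique:
  assumes "inj_on idf V" "S \<subseteq> V"
    and "w1 \<in> S" "in_cone k \<phi> x c w1" "\<forall>y\<in>S. in_cone k \<phi> x c y \<longrightarrow> dID idf w1 x \<le> dID idf y x"
    and "w2 \<in> S" "in_cone k \<phi> x c w2" "\<forall>y\<in>S. in_cone k \<phi> x c y \<longrightarrow> dID idf w2 x \<le> dID idf y x"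
  shows "w1 = w2"
proof -
  have "dID idf w1 x = dID idf w2 x" using assms by (meson order.antisym)
  then show ?thesis using dID_inj assms by blast
qed

lemma root_child:
  assumes "sink_tree k \<phi> idf x S (w, x)" "x \<notin> S"
  shows "w \<in> S \<and> in_cone k \<phi> x (cone_idx k \<phi> x w) w \<and>
    (\<forall>y\<in>S. in_cone k \<phi> x (cone_idx k \<phi> x w) y \<longrightarrow> dID idf w x \<le> dID idf y x)"
  using assms(1)
proof (cases rule: sink_tree.cases)
  case (edge c)
  then show ?thesis by (auto simp: in_cone_def)
next
  case (rec w' c)
  then show ?thesis using sink_endpoints[OF rec(4)] assms(2) by auto
qed

lemma child_cone_inj:
  assumes inj: "inj_on idf V"
  shows "finite S \<Longrightarrow> S \<subseteq> V \<Longrightarrow> x \<notin> S \<Longrightarrow> sink_tree k \<phi> idf x S (w1, z) \<Longrightarrow> sink_tree k \<phi> idf x S (w2, z)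
    \<Longrightarrow> cone_idx k \<phi> z w1 = cone_idx k \<phi> z w2 \<Longrightarrow> w1 = w2"
proof (induction "card S" arbitrary: x S rule: less_induct)
  case less
  show ?case
  proof (cases "z = x")
    case True
    then show ?thesis using root_child[of k \<phi> idf x S w1] root_child[of k \<phi> idf x S w2] less.prems
      argmin_unique[OF inj less.prems(2), of w1 k \<phi> x "cone_idx k \<phi> x w1" w2] by auto
  next
    case False
    from less.prems(4) obtain w1' c1 where r1: "w1' \<in> S" "in_cone k \<phi> x c1 w1'"
      "\<forall>y\<in>S. in_cone k \<phi> x c1 y \<longrightarrow> dID idf w1' x \<le> dID idf y x"
      "sink_tree k \<phi> idf w1' {y \<in> S. in_cone k \<phi> x c1 y \<and> y \<noteq> w1'} (w1, z)"
      using False by (cases rule: sink_tree.cases) auto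
    from less.prems(5) obtain w2' c2 where r2: "w2' \<in> S" "in_cone k \<phi> x c2 w2'"
      "\<forall>y\<in>S. in_cone k \<phi> x c2 y \<longrightarrow> dID idf w2' x \<le> dID idf y x"
      "sink_tree k \<phi> idf w2' {y \<in> S. in_cone k \<phi> x c2 y \<and> y \<noteq> w2'} (w2, z)"
      using False by (cases rule: sink_tree.cases) auto
    have "in_cone k \<phi> x c1 z" using sink_endpoints[OF r1(4)] r1(2) by auto
    moreover have "in_cone k \<phi> x c2 z" using sink_endpoints[OF r2(4)] r2(2) by auto
    ultimately have c12: "c1 = c2" by (simp add: in_cone_def)
    have ww: "w1' = w2'" using argmin_unique[OF inj less.prems(2) r1(1-3)] r2(1-3) c12 by blast
    define S' where "S' = {y \<in> S. in_cone k \<phi> x c1 y \<and> y \<noteq> w1'}"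
    have lt: "card S' < card S" using psubset_card_mono[OF less.prems(1), of S'] r1(1) by (auto simp: S'_def)
    show ?thesis
      by (rule less.hyps[OF lt, of w1']) (use less.prems r1 r2 ww c12 in \<open>auto simp: S'_def\<close>)
  qed
qed

lemma parent_unique:
  assumes inj: "inj_on idf V"
  shows "finite S \<Longrightarrow> S \<subseteq> V \<Longrightarrow> x \<notin> S \<Longrightarrow> sink_tree k \<phi> idf x S (w, z1) \<Longrightarrow> sink_tree k \<phi> idf x S (w, z2)
    \<Longrightarrow> z1 = z2"
proof (induction "card S" arbitrary: x S rule: less_induct)
  case less
  have rec_form: "\<exists>w' c. w' \<in> S \<and> in_cone k \<phi> x c w' \<and>
      (\<forall>y\<in>S. in_cone k \<phi> x c y \<longrightarrow> dID idf w' x \<le> dID idf y x) \<and>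
      sink_tree k \<phi> idf w' {y \<in> S. in_cone k \<phi> x c y \<and> y \<noteq> w'} (w, z)"
    if "sink_tree k \<phi> idf x S (w, z)" "z \<noteq> x" for z
    using that by (cases rule: sink_tree.cases) auto
  have no_both: False if zx: "sink_tree k \<phi> idf x S (w, x)" and z: "sink_tree k \<phi> idf x S (w, z)" "z \<noteq> x" for z
  proof -
    obtain w' c where r: "w' \<in> S" "in_cone k \<phi> x c w'"
      "\<forall>y\<in>S. in_cone k \<phi> x c y \<longrightarrow> dID idf w' x \<le> dID idf y x"
      "sink_tree k \<phi> idf w' {y \<in> S. in_cone k \<phi> x c y \<and> y \<noteq> w'} (w, z)"
      using rec_form[OF z] by blast
    have wS': "w \<in> S" "in_cone k \<phi> x c w" "w \<noteq> w'" using sink_endpoints[OF r(4)] by auto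
    have rc: "w \<in> S \<and> in_cone k \<phi> x (cone_idx k \<phi> x w) w \<and>
      (\<forall>y\<in>S. in_cone k \<phi> x (cone_idx k \<phi> x w) y \<longrightarrow> dID idf w x \<le> dID idf y x)"
      using root_child[OF zx less.prems(3)] .
    have "cone_idx k \<phi> x w = c" using wS'(2) by (simp add: in_cone_def)
    then have "w = w'" using argmin_unique[OF inj less.prems(2), of w k \<phi> x c w'] rc r by auto
    then show False using wS'(3) by simp
  qed
  show ?case
  proof (cases "z1 = x \<or> z2 = x")
    case True
    then show ?thesis using no_both less.prems(4,5) by metis
  next
    case False
    obtain w1' c1 where r1: "w1' \<in> S" "in_cone k \<phi> x c1 w1'"
      "\<forall>y\<in>S. in_cone k \<phi> x c1 y \<longrightarrow> dID idf w1' x \<le> dID idf y x"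
      "sink_tree k \<phi> idf w1' {y \<in> S. in_cone k \<phi> x c1 y \<and> y \<noteq> w1'} (w, z1)"
      using rec_form[OF less.prems(4)] False by blast
    obtain w2' c2 where r2: "w2' \<in> S" "in_cone k \<phi> x c2 w2'"
      "\<forall>y\<in>S. in_cone k \<phi> x c2 y \<longrightarrow> dID idf w2' x \<le> dID idf y x"
      "sink_tree k \<phi> idf w2' {y \<in> S. in_cone k \<phi> x c2 y \<and> y \<noteq> w2'} (w, z2)"
      using rec_form[OF less.prems(5)] False by blast
    have "in_cone k \<phi> x c1 w" using sink_endpoints[OF r1(4)] by auto
    moreover have "in_cone k \<phi> x c2 w" using sink_endpoints[OF r2(4)] by auto
    ultimately have c12: "c1 = c2" by (simp add: in_cone_def)
    have ww: "w1' = w2'" using argmin_unique[OF inj less.prems(2) r1(1-3)] r2(1-3) c12 by blast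
    define S' where "S' = {y \<in> S. in_cone k \<phi> x c1 y \<and> y \<noteq> w1'}"
    have lt: "card S' < card S" using psubset_card_mono[OF less.prems(1), of S'] r1(1) by (auto simp: S'_def)
    show ?thesis
      by (rule less.hyps[OF lt, of w1']) (use less.prems r1 r2 ww c12 in \<open>auto simp: S'_def\<close>)
  qed
qed

lemma uID_inj:
  assumes "inj_on idf V" "v \<in> V" "R1 \<in> V" "R2 \<in> V" "R1 \<noteq> v" "R2 \<noteq> v"
    and "uID idf v R1 = uID idf v R2"
  shows "R1 = R2"
  using assms unfolding uID_def dID_def inj_on_def min_def
  by (auto split: if_splits)

lemma card_UN_bound:
  assumes "finite I" "\<And>i. i \<in> I \<Longrightarrow> card (A i) \<le> m"
  shows "card (\<Union>i\<in>I. A i) \<le> card I * m"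
proof -
  have "card (\<Union>i\<in>I. A i) \<le> (\<Sum>i\<in>I. card (A i))" by (rule card_UN_le[OF assms(1)])
  also have "\<dots> \<le> of_nat (card I) * m" by (rule sum_bounded_above) (use assms(2) in auto)
  finally show ?thesis by simp
qed

lemma degree_bound:
  fixes V :: "complex set" and idf :: "complex \<Rightarrow> nat" and k :: nat and r \<phi> :: real
  assumes finV: "finite V" and inj: "inj_on idf V" and k0: "k > 0"
  shows "degree (YES k r \<phi> idf V) v \<le> k * (k + 2)"
proof -
  define ye where "ye = ye_edges k r \<phi> idf V"
  define yao where "yao = yao_edges k \<phi> idf V"
  define Ss where "Ss = (\<lambda>R c. {x. (x, R) \<in> ye \<and> in_cone k \<phi> R c x})"
  have ye_yao: "ye \<subseteq> yao" by (auto simp: ye_def yao_def ye_edges_def filt_F_def)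
  have yao_V: "yao \<subseteq> V \<times> V" by (auto simp: yao_def yao_edges_def udg_edges_def)
  have SsV: "Ss R c \<subseteq> V" for R c using ye_yao yao_V by (auto simp: Ss_def)
  have fSs: "finite (Ss R c)" for R c using SsV finV finite_subset by blast
  have RSs: "R \<notin> Ss R c" for R c by (simp add: Ss_def in_cone_def)
  have yes_char: "e \<in> yes_edges k r \<phi> idf V \<longleftrightarrow> (\<exists>R\<in>V. \<exists>c<k. sink_tree k \<phi> idf R (Ss R c) e)" for e
    by (simp add: yes_edges_def Ss_def ye_def)
  define Yout where "Yout = {R. (v, R) \<in> yao}"
  have fYout: "finite Yout" using yao_V finV by (auto simp: Yout_def intro: finite_subset[of _ V])
  have cYout: "card Yout \<le> k"
  proof -
    have "inj_on (cone_idx k \<phi> v) Yout"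
    proof (rule inj_onI)
      fix R1 R2 assume R: "R1 \<in> Yout" "R2 \<in> Yout" "cone_idx k \<phi> v R1 = cone_idx k \<phi> v R2"
      have G: "(v, R1) \<in> udg_edges V" "(v, R2) \<in> udg_edges V" using R by (auto simp: Yout_def yao_def yao_edges_def)
      have "uID idf v R1 \<le> uID idf v R2" "uID idf v R2 \<le> uID idf v R1"
        using R G by (auto simp: Yout_def yao_def yao_edges_def)
      then have "uID idf v R1 = uID idf v R2" by simp
      then show "R1 = R2" using uID_inj[OF inj] G by (auto simp: udg_edges_def)
    qed
    moreover have "cone_idx k \<phi> v ` Yout \<subseteq> {..<k}" using cone_idx_lt[OF k0] by auto
    ultimately show ?thesis using card_inj_on_le[of "cone_idx k \<phi> v" Yout "{..<k}"] by simp
  qed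
  define Out where "Out = {u. (v, u) \<in> yes_edges k r \<phi> idf V}"
  define In where "In = {u. (u, v) \<in> yes_edges k r \<phi> idf V}"
  have deg: "degree (YES k r \<phi> idf V) v = card (Out \<union> In)"
    unfolding degree_def YES_def Out_def In_def by (rule arg_cong[where f=card]) auto
  define P where "P = (\<lambda>R. {u. sink_tree k \<phi> idf R (Ss R (cone_idx k \<phi> R v)) (v, u)})"
  have Out_sub: "Out \<subseteq> (\<Union>R\<in>Yout. P R)"
  proof
    fix u assume "u \<in> Out"
    then obtain R c where R: "R \<in> V" "c < k" "sink_tree k \<phi> idf R (Ss R c) (v, u)"
      using yes_char by (auto simp: Out_def)
    have "v \<in> Ss R c" using sink_endpoints[OF R(3)] by simp
    then have "(v, R) \<in> ye" "c = cone_idx k \<phi> R v" by (auto simp: Ss_def in_cone_def)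
    then show "u \<in> (\<Union>R\<in>Yout. P R)" using R ye_yao by (auto simp: Yout_def P_def)
  qed
  have fP: "finite (P R)" for R
  proof -
    have "P R \<subseteq> insert R (Ss R (cone_idx k \<phi> R v))"
      using sink_endpoints by (fastforce simp: P_def)
    then show ?thesis using fSs finite_subset by blast
  qed
  have cP: "card (P R) \<le> 1" for R
  proof -
    have "\<forall>a1\<in>P R. \<forall>a2\<in>P R. a1 = a2"
      using parent_unique[OF inj fSs SsV RSs] by (auto simp: P_def)
    then show ?thesis using card_le_Suc0_iff_eq[OF fP] by simp
  qed
  have cOut: "card Out \<le> k"
  proof -
    have "card Out \<le> card (\<Union>R\<in>Yout. P R)"
      by (rule card_mono[OF _ Out_sub]) (use fYout fP in auto)
    also have "\<dots> \<le> card Yout * 1" by (rule card_UN_bound[OF fYout cP])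
    finally show ?thesis using cYout by simp
  qed
  define C0 where "C0 = (\<lambda>c. {w. sink_tree k \<phi> idf v (Ss v c) (w, v)})"
  define C1 where "C1 = (\<lambda>R. {w. sink_tree k \<phi> idf R (Ss R (cone_idx k \<phi> R v)) (w, v)})"
  have In_sub: "In \<subseteq> (\<Union>c\<in>{..<k}. C0 c) \<union> (\<Union>R\<in>Yout. C1 R)"
  proof
    fix w assume "w \<in> In"
    then obtain R c where R: "R \<in> V" "c < k" "sink_tree k \<phi> idf R (Ss R c) (w, v)"
      using yes_char by (auto simp: In_def)
    show "w \<in> (\<Union>c\<in>{..<k}. C0 c) \<union> (\<Union>R\<in>Yout. C1 R)"
    proof (cases "v = R")
      case True
      then show ?thesis using R by (auto simp: C0_def)
    next
      case False
      then have "v \<in> Ss R c" using sink_endpoints[OF R(3)] by simp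
      then have "(v, R) \<in> ye" "c = cone_idx k \<phi> R v" by (auto simp: Ss_def in_cone_def)
      then show ?thesis using R ye_yao by (auto simp: Yout_def C1_def)
    qed
  qed
  have fC0: "finite (C0 c)" for c
  proof -
    have "C0 c \<subseteq> Ss v c" using sink_endpoints by (fastforce simp: C0_def)
    then show ?thesis using fSs finite_subset by blast
  qed
  have fC1: "finite (C1 R)" for R
  proof -
    have "C1 R \<subseteq> Ss R (cone_idx k \<phi> R v)" using sink_endpoints by (fastforce simp: C1_def)
    then show ?thesis using fSs finite_subset by blast
  qed
  have cC0: "card (C0 c) \<le> 1" for c
  proof -
    have "\<forall>a1\<in>C0 c. \<forall>a2\<in>C0 c. a1 = a2"
    proof (intro ballI)
      fix a1 a2 assume a: "a1 \<in> C0 c" "a2 \<in> C0 c"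
      have r1: "a1 \<in> Ss v c \<and> in_cone k \<phi> v (cone_idx k \<phi> v a1) a1 \<and>
        (\<forall>y\<in>Ss v c. in_cone k \<phi> v (cone_idx k \<phi> v a1) y \<longrightarrow> dID idf a1 v \<le> dID idf y v)"
        using root_child[OF _ RSs] a(1) by (simp add: C0_def)
      have r2: "a2 \<in> Ss v c \<and> in_cone k \<phi> v (cone_idx k \<phi> v a2) a2 \<and>
        (\<forall>y\<in>Ss v c. in_cone k \<phi> v (cone_idx k \<phi> v a2) y \<longrightarrow> dID idf a2 v \<le> dID idf y v)"
        using root_child[OF _ RSs] a(2) by (simp add: C0_def)
      have "cone_idx k \<phi> v a1 = c" "cone_idx k \<phi> v a2 = c" using r1 r2 by (auto simp: Ss_def in_cone_def)
      then show "a1 = a2" using argmin_unique[OF inj SsV[of v c], of a1 k \<phi> v c a2] r1 r2 by auto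
    qed
    then show ?thesis using card_le_Suc0_iff_eq[OF fC0] by simp
  qed
  have cC1: "card (C1 R) \<le> k" for R
  proof -
    have "inj_on (cone_idx k \<phi> v) (C1 R)"
      by (rule inj_onI) (use child_cone_inj[OF inj fSs SsV RSs] in \<open>auto simp: C1_def\<close>)
    moreover have "cone_idx k \<phi> v ` (C1 R) \<subseteq> {..<k}" using cone_idx_lt[OF k0] by auto
    ultimately show ?thesis using card_inj_on_le[of "cone_idx k \<phi> v" "C1 R" "{..<k}"] by simp
  qed
  have cIn: "card In \<le> k * 1 + k * k"
  proof -
    have f1: "finite (\<Union>c\<in>{..<k}. C0 c)" using fC0 by auto
    have f2: "finite (\<Union>R\<in>Yout. C1 R)" using fC1 fYout by auto
    have "card In \<le> card ((\<Union>c\<in>{..<k}. C0 c) \<union> (\<Union>R\<in>Yout. C1 R))"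
      by (rule card_mono[OF _ In_sub]) (use f1 f2 in auto)
    also have "\<dots> \<le> card (\<Union>c\<in>{..<k}. C0 c) + card (\<Union>R\<in>Yout. C1 R)" by (rule card_Un_le)
    also have "card (\<Union>c\<in>{..<k}. C0 c) \<le> card {..<k} * 1" by (rule card_UN_bound) (use cC0 in auto)
    also have "card (\<Union>R\<in>Yout. C1 R) \<le> card Yout * k" by (rule card_UN_bound[OF fYout cC1])
    also have "card Yout * k \<le> k * k" using cYout by simp
    finally show ?thesis by simp
  qed
  have "card (Out \<union> In) \<le> card Out + card In" by (rule card_Un_le)
  also have "\<dots> \<le> k + (k * 1 + k * k)" using cOut cIn by linarith
  also have "\<dots> = k * (k + 2)" by (simp add: algebra_simps)
  finally show ?thesis using deg by simp
qed

theorem theorem2: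
  fixes V :: "complex set" and idf :: "complex \<Rightarrow> nat" and k :: nat
    and r \<phi> \<theta> lam :: real
  assumes "finite V"
    and "inj_on idf V"
    and "connected_graph V (udg_edges V)"
    and "r > 1"
    and "k \<ge> 8"
    and "\<theta> = 2 * pi / real k"
    and "lam = 1 / (2 * r * cos \<theta>)"
    and "cos \<theta> - sin \<theta> > 1 / (lam + 1)"
  shows "(\<forall>v\<in>V. degree (YES k r \<phi> idf V) v \<le> k * (k + 2)) \<and>
         (\<forall>t::real. t \<ge> (lam / cos (2 * \<theta>)) / ((lam + 1) * (cos \<theta> - sin \<theta>) - 1)
            \<longrightarrow> is_length_spanner V (YES k r \<phi> idf V) (udg_edges V) t)"
proof (intro conjI allI impI ballI)
  fix v assume "v \<in> V"
  show "degree (YES k r \<phi> idf V) v \<le> k * (k + 2)"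
    by (rule degree_bound) (use assms in auto)
next
  fix t :: real
  assume tt: "t \<ge> (lam / cos (2 * \<theta>)) / ((lam + 1) * (cos \<theta> - sin \<theta>) - 1)"
  have k0: "real k \<ge> 8" using assms(5) by simp
  have th0: "0 < \<theta>" using assms(5,6) by simp
  have th4: "\<theta> \<le> pi / 4"
  proof -
    have "2 * pi / real k \<le> 2 * pi / 8" using k0 by (intro divide_left_mono) auto
    then show ?thesis using assms(6) by simp
  qed
  have s0: "0 \<le> sin \<theta>" using th0 th4 by (intro sin_ge_zero) auto
  have c0: "0 < cos \<theta>" using th0 th4 by (intro cos_gt_zero) auto
  have cs: "(cos \<theta>)^2 + (sin \<theta>)^2 = 1" by simp
  have tt': "t \<ge> (lam / ((cos \<theta>)^2 - (sin \<theta>)^2)) / ((lam + 1) * (cos \<theta> - sin \<theta>) - 1)"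
    using tt by (simp add: cos_double)
  have K: "cos \<theta> - sin \<theta> > 0 \<and> (cos \<theta> - sin \<theta>) * (r + 1) - r > 0 \<and>
      t * (cos \<theta> - sin \<theta>) * ((cos \<theta> - sin \<theta>) * (r + 1) - r) \<ge> 1"
    by (rule const_key[OF cs s0 c0 assms(4) assms(7) assms(8) tt'])
  interpret yes_setup V idf k r \<phi> t
    by unfold_locales (use assms K s0 in \<open>simp_all\<close>)
  show "is_length_spanner V (YES k r \<phi> idf V) (udg_edges V) t" by (rule spanner)
qed

end
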